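(* The only novel partition of length $5$ is $(2,1,1,1,1)$.
   Context: An integer partition is $\lambda=(\lambda_1,\dots,\lambda_k)$ with integers $\lambda_1\ge\dots\ge\lambda_k\ge 1$; $k$ is its length. For $v\in\mathbb{Z}^k$ let $v^{\perp B}=\{x\in\{-1,1\}^k: v\cdot x=0\}$; $\lambda^{\perp B}$ is this set for $(\lambda_1,\dots,\lambda_k)$. $V_\lambda\subset\mathbb{Z}^k$ is the set of vectors obtained from $(\lambda_1,\dots,\lambda_k)$ by permuting coordinates and changing signs of some coordinates, with first coordinate positive. For $I\subset\{1,\dots,m\}$, $\mathrm{Proj}_I:\{-1,1\}^m\to\{-1,1\}^{|I|}$ keeps the coordinates indexed by $I$. Reduction: for partitions $\mu$ of length $m$ and $\lambda$ of length $k\le m$, $\mu\Rightarrow\lambda$ iff there exist $I\subset\{1,\dots,m\}$, $|I|=k$, and $v\in V_\lambda$ with $\mathrm{Proj}_I(\mu^{\perp B})\subset v^{\perp B}$. $\mu$ strictly reduces to $\lambda$ iff $\mu\Rightarrow\lambda$ and not $\lambda\Rightarrow\mu$. Partitions $\lambda,\mu$ of the same length are equivalent iff there is $w\in V_\mu$ with $\lambda^{\perp B}=w^{\perp B}$. A partition $\lambda$ is novel iff $\lambda^{\perp B}\neq\emptyset$, $\lambda$ strictly reduces to no partition, and $\lambda$ is lexicographically smallest among partitions equivalent to it. *)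

theory Defs
  imports Main "HOL-Library.Multiset"
begin

definition is_partition :: "int list \<Rightarrow> bool" where
  "is_partition l \<longleftrightarrow> l \<noteq> [] \<and> sorted_wrt (\<ge>) l \<and> (\<forall>x\<in>set l. x \<ge> 1)"

definition signs :: "nat \<Rightarrow> int list set" where
  "signs k = {x. length x = k \<and> set x \<subseteq> {-1, 1}}"

definition dotp :: "int list \<Rightarrow> int list \<Rightarrow> int" where
  "dotp v x = sum_list (map2 (*) v x)"

definition perpB :: "int list \<Rightarrow> int list set" where
  "perpB v = {x \<in> signs (length v). dotp v x = 0}"

definition Vset :: "int list \<Rightarrow> int list set" where
  "Vset l = {v. length v = length l \<and> mset (map abs v) = mset l \<and> v \<noteq> [] \<and> hd v > 0}"

text \<open>Proj_I keeps the coordinates indexed by I (0-based indices, original order).\<close>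
definition Proj :: "nat set \<Rightarrow> int list \<Rightarrow> int list" where
  "Proj I x = nths x I"

definition reduces :: "int list \<Rightarrow> int list \<Rightarrow> bool" (infix "\<Rrightarrow>" 50) where
  "reduces mu l \<longleftrightarrow> length l \<le> length mu \<and>
     (\<exists>I. I \<subseteq> {..<length mu} \<and> card I = length l \<and>
        (\<exists>v\<in>Vset l. Proj I ` perpB mu \<subseteq> perpB v))"

definition strictly_reduces :: "int list \<Rightarrow> int list \<Rightarrow> bool" where
  "strictly_reduces mu l \<longleftrightarrow> reduces mu l \<and> \<not> reduces l mu"

definition equivalent :: "int list \<Rightarrow> int list \<Rightarrow> bool" where
  "equivalent l mu \<longleftrightarrow> length l = length mu \<and> (\<exists>w\<in>Vset mu. perpB l = perpB w)"

definition lex_le :: "int list \<Rightarrow> int list \<Rightarrow> bool" where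
  "lex_le a b \<longleftrightarrow> a = b \<or> (a, b) \<in> lexord {(x, y). x < y}"

definition novel :: "int list \<Rightarrow> bool" where
  "novel l \<longleftrightarrow> is_partition l \<and> perpB l \<noteq> {} \<and>
     \<not> (\<exists>mu. is_partition mu \<and> strictly_reduces l mu) \<and>
     (\<forall>mu. is_partition mu \<and> length mu = length l \<and> equivalent l mu \<longrightarrow> lex_le l mu)"

end

theory Submission imports Defs begin

lemma signs5: assumes "x \<in> signs 5"
  obtains x0 x1 x2 x3 x4 where "x = [x0,x1,x2,x3,x4]" "x0 \<in> {-1,1}" "x1 \<in> {-1,1}"
    "x2 \<in> {-1,1}" "x3 \<in> {-1,1}" "x4 \<in> {-1,1}"
proof -
  from assms have "length x = 5" "set x \<subseteq> {-1,1}" by (auto simp: signs_def)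
  then show ?thesis using that by (auto simp: numeral_eq_Suc length_Suc_conv)
qed

lemma proj5: "Proj I [x0,x1,x2,x3,x4] = (if 0\<in>I then [x0] else []) @ (if 1\<in>I then [x1] else [])
   @ (if 2\<in>I then [x2] else []) @ (if 3\<in>I then [x3] else []) @ (if 4\<in>I then [x4] else [])"
  by (simp add: Proj_def nths_Cons numeral_eq_Suc)

lemma dot5: "dotp [a,b,c,d,e] [x0,x1,x2,x3,x4] = a*x0+b*x1+c*x2+d*x3+e*x4"
  by (simp add: dotp_def)

lemma pair_red:
  assumes "is_partition l" "length l = 5" "I \<subseteq> {..<5}" "card I = 2" "s \<in> {-1,1}"
    "\<forall>x\<in>perpB l. \<exists>p q. Proj I x = [p,q] \<and> p*q = s \<and> p \<in> {-1,1} \<and> q \<in> {-1,1}"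
  shows "strictly_reduces l [1,1]"
proof -
  have V: "[1,-s] \<in> Vset [1,1]" using assms(5) by (auto simp: Vset_def)
  have "Proj I ` perpB l \<subseteq> perpB [1,-s]"
  proof
    fix y assume "y \<in> Proj I ` perpB l"
    then obtain x where x: "x \<in> perpB l" "y = Proj I x" by auto
    then obtain p q where "y = [p,q]" "p*q = s" "p \<in> {-1,1}" "q \<in> {-1,1}" using assms(6) by blast
    then show "y \<in> perpB [1,-s]" using assms(5)
      by (auto simp: perpB_def signs_def dotp_def)
  qed
  then have "reduces l [1,1]" unfolding reduces_def
    using assms(2,3,4) V by (intro conjI exI[of _ I] bexI[of _ "[1,-s]"]) auto
  moreover have "\<not> reduces [1,1] l" using assms(2) by (simp add: reduces_def)
  ultimately show ?thesis by (simp add: strictly_reduces_def)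
qed

lemma pair_red5:
  assumes "is_partition l" "l = [a,b,c,d,e]" "i < j" "j < 5" "s \<in> {-1,1}"
    "\<And>x0 x1 x2 x3 x4. x0 \<in> {-1,1} \<Longrightarrow> x1 \<in> {-1,1} \<Longrightarrow> x2 \<in> {-1,1} \<Longrightarrow> x3 \<in> {-1,1} \<Longrightarrow> x4 \<in> {-1,1}
      \<Longrightarrow> a*x0+b*x1+c*x2+d*x3+e*x4 = 0 \<Longrightarrow> [x0,x1,x2,x3,x4] ! i * [x0,x1,x2,x3,x4] ! j = s"
  shows "strictly_reduces l [1,1]"
proof (rule pair_red[where I="{i,j}" and s=s])
  show "\<forall>x\<in>perpB l. \<exists>p q. Proj {i,j} x = [p,q] \<and> p*q = s \<and> p \<in> {-1,1} \<and> q \<in> {-1,1}"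
  proof
    fix x assume "x \<in> perpB l"
    then have xs: "x \<in> signs 5" and dz: "dotp l x = 0" using assms(2) by (auto simp: perpB_def numeral_eq_Suc)
    from xs obtain x0 x1 x2 x3 x4 where X: "x = [x0,x1,x2,x3,x4]" "x0 \<in> {-1,1}" "x1 \<in> {-1,1}"
      "x2 \<in> {-1,1}" "x3 \<in> {-1,1}" "x4 \<in> {-1,1}" by (rule signs5)
    have pr: "[x0,x1,x2,x3,x4] ! i * [x0,x1,x2,x3,x4] ! j = s"
      using assms(6)[OF X(2-6)] dz X(1) assms(2) by (simp add: dot5)
    have "Proj {i,j} x = [x!i, x!j]"
      using assms(3,4) X(1)
      by (cases i; cases j; simp add: proj5 numeral_eq_Suc less_Suc_eq; linarith?)
    moreover have "x!i \<in> {-1,1}" "x!j \<in> {-1,1}" using X assms(3,4)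
      by (simp_all add: numeral_eq_Suc less_Suc_eq nth_Cons split: nat.splits; auto)+
    ultimately show "\<exists>p q. Proj {i,j} x = [p,q] \<and> p*q = s \<and> p \<in> {-1,1} \<and> q \<in> {-1,1}"
      using pr X(1) by auto
  qed
qed (use assms in auto)

lemma pair_const:
  fixes a b c d e :: int
  assumes "a \<ge> b" "b \<ge> c" "c \<ge> d" "d \<ge> e" "e \<ge> 1"
    and "x0 \<in> {-1,1}" "x1 \<in> {-1,1}" "x2 \<in> {-1,1}" "x3 \<in> {-1,1}" "x4 \<in> {-1,1}"
    and "a*x0+b*x1+c*x2+d*x3+e*x4 = 0"
  shows "a+b \<noteq> c+d+e \<Longrightarrow> x0*x1 = -1"
    and "a+b = c+d+e \<Longrightarrow> c < b \<Longrightarrow> x1*x2 = -1"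
    and "a+b = c+d+e \<Longrightarrow> c = b \<Longrightarrow> d < b \<Longrightarrow> x3*x4 = 1"
    and "a+b = c+d+e \<Longrightarrow> c = b \<Longrightarrow> d = b \<Longrightarrow> e < b \<Longrightarrow> x0*x4 = -1"
  using assms by auto

lemma in21:
  "[1,1,-1,-1,-1] \<in> perpB [2,1,1,1,1]" "[1,-1,1,-1,-1] \<in> perpB [2,1,1,1,1]"
  "[1,-1,-1,1,-1] \<in> perpB [2,1,1,1,1]" "[1,-1,-1,-1,1] \<in> perpB [2,1,1,1,1]"
  by (auto simp: perpB_def signs_def dotp_def)

lemma fam:
  assumes "perpB [2,1,1,1,1] \<subseteq> perpB v" "v \<in> Vset mu" "is_partition mu" "length mu = 5"
  shows "\<exists>t>0. mu = [2*t,t,t,t,t]"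
proof -
  have lv: "length v = 5" "mset (map abs v) = mset mu" "hd v > 0" using assms(2,4) by (auto simp: Vset_def)
  then obtain v0 v1 v2 v3 v4 where V: "v = [v0,v1,v2,v3,v4]" by (auto simp: numeral_eq_Suc length_Suc_conv)
  have "dotp v [1,1,-1,-1,-1] = 0" "dotp v [1,-1,1,-1,-1] = 0"
    "dotp v [1,-1,-1,1,-1] = 0" "dotp v [1,-1,-1,-1,1] = 0"
    using assms(1) in21 by (auto simp: perpB_def)
  then have e: "v1 = v2" "v2 = v3" "v3 = v4" "v0 = 2*v4" using V by (auto simp: dot5)
  define t where "t = v4"
  have tp: "t > 0" using lv(3) V e t_def by simp
  have M: "mset mu = mset [2*t,t,t,t,t]" using lv(2) V e t_def tp by simp
  obtain m0 m1 m2 m3 m4 where mu: "mu = [m0,m1,m2,m3,m4]" using assms(4)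
    by (auto simp: numeral_eq_Suc length_Suc_conv)
  have "set mu = set [2*t,t,t,t,t]" by (metis M mset_eq_setD)
  then have S: "m0 \<in> {2*t,t}" "m1 \<in> {2*t,t}" "m2 \<in> {2*t,t}" "m3 \<in> {2*t,t}" "m4 \<in> {2*t,t}"
    using mu by auto
  have "sum_list mu = sum_list [2*t,t,t,t,t]" by (metis M sum_mset_sum_list)
  then have su: "m0+m1+m2+m3+m4 = 6*t" using mu by simp
  have so: "m0 \<ge> m1" "m1 \<ge> m2" "m2 \<ge> m3" "m3 \<ge> m4" using assms(3) mu by (auto simp: is_partition_def)
  have "m0 = 2*t \<and> m1 = t \<and> m2 = t \<and> m3 = t \<and> m4 = t" using S su so tp by auto
  then show ?thesis using mu tp by auto
qed

lemma scale:
  assumes "(t::int) > 0" shows "perpB [2*t,t,t,t,t] = perpB [2,1,1,1,1]"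
proof -
  have "dotp [2*t,t,t,t,t] x = t * dotp [2,1,1,1,1] x" if xs: "x \<in> signs 5" for x
  proof -
    obtain x0 x1 x2 x3 x4 where "x = [x0,x1,x2,x3,x4]" using signs5[OF xs] by metis
    then show ?thesis by (simp add: dot5 algebra_simps)
  qed
  then show ?thesis using assms by (auto simp: perpB_def numeral_eq_Suc)
qed

lemma small:
  assumes "I \<subseteq> {..<5}" "card I = length v" "length v < 5" "\<forall>y\<in>set v. y \<noteq> 0"
    "Proj I ` perpB [2,1,1,1,1] \<subseteq> perpB v" "v \<noteq> []"
  shows False
proof -
  have F: "length v = length (Proj I x) \<and> dotp v (Proj I x) = 0" if "x \<in> perpB [2,1,1,1,1]" for x
    using assms(5) that by (auto simp: perpB_def signs_def)
  note G = F[OF in21(1)] F[OF in21(2)] F[OF in21(3)] F[OF in21(4)]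
  show False
    using G assms(3,4,6)
    by (cases "0\<in>I"; cases "1\<in>I"; cases "2\<in>I"; cases "3\<in>I"; cases "4\<in>I";
        auto simp: proj5 length_Suc_conv dotp_def)
qed

lemma novel21: "novel [2,1,1,1,1]"
  unfolding novel_def
proof (intro conjI notI allI impI)
  show "is_partition [2,1,1,1,1]" by (simp add: is_partition_def)
  show "perpB [2,1,1,1,1] = {} \<Longrightarrow> False" using in21(1) by auto
next
  fix mu assume m: "is_partition mu \<and> length mu = length [2::int,1,1,1,1] \<and> equivalent [2,1,1,1,1] mu"
  then obtain w where w: "w \<in> Vset mu" "perpB [2,1,1,1,1] = perpB w" by (auto simp: equivalent_def)
  then obtain t where t: "t > 0" "mu = [2*t,t,t,t,t]" using fam[of w mu] m by auto
  show "lex_le [2,1,1,1,1] mu"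
  proof (cases "t = 1")
    case True then show ?thesis using t by (simp add: lex_le_def)
  next
    case False then show ?thesis using t by (simp add: lex_le_def)
  qed
next
  assume "\<exists>mu. is_partition mu \<and> strictly_reduces [2,1,1,1,1] mu"
  then obtain mu where mu: "is_partition mu" "reduces [2,1,1,1,1] mu" "\<not> reduces mu [2,1,1,1,1]"
    by (auto simp: strictly_reduces_def)
  have l5: "length [2::int,1,1,1,1] = 5" by simp
  from mu(2)[unfolded reduces_def l5] obtain I v where Iv: "length mu \<le> 5" "I \<subseteq> {..<5}" "card I = length mu"
    "v \<in> Vset mu" "Proj I ` perpB [2,1,1,1,1] \<subseteq> perpB v"
    by blast
  have vl: "length v = length mu" "mset (map abs v) = mset mu" using Iv(4) by (auto simp: Vset_def)
  show False
  proof (cases "length mu = 5")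
    case True
    have I: "I = {..<5}" using card_subset_eq[of "{..<5}" I] Iv True by simp
    have P: "Proj {..<5} x = x" if "length x = 5" for x :: "int list"
      using that by (simp add: Proj_def nths_all)
    have "perpB [2,1,1,1,1] \<subseteq> perpB v"
    proof
      fix x assume x: "x \<in> perpB [2,1,1,1,1]"
      then have "length x = 5" by (simp add: perpB_def signs_def)
      then show "x \<in> perpB v" using Iv(5) x I P by force
    qed
    then obtain t where t: "t > 0" "mu = [2*t,t,t,t,t]" using fam[of v mu] mu(1) Iv(4) True by auto
    have W: "[2,1,1,1,1] \<in> Vset [2,1,1,1,1]" by (simp add: Vset_def)
    have "Proj {..<5} ` perpB mu \<subseteq> perpB [2,1,1,1,1]"
    proof
      fix y assume "y \<in> Proj {..<5} ` perpB mu"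
      then obtain x where x: "x \<in> perpB mu" "y = Proj {..<5} x" by auto
      then have "length x = 5" using t by (simp add: perpB_def signs_def)
      then show "y \<in> perpB [2,1,1,1,1]" using x scale[OF t(1)] t(2) P by simp
    qed
    then have "reduces mu [2,1,1,1,1]" unfolding reduces_def
      using t W by (intro conjI exI[of _ "{..<5}"] bexI[of _ "[2,1,1,1,1]"]) auto
    then show False using mu(3) by simp
  next
    case False
    have nz: "\<forall>y\<in>set v. y \<noteq> 0"
    proof
      fix y assume "y \<in> set v"
      then have "abs y \<in> set mu" using vl(2) by (metis image_eqI list.set_map mset_eq_setD)
      then show "y \<noteq> 0" using mu(1) by (auto simp: is_partition_def)
    qed
    have "v \<noteq> []" using Iv(4) by (auto simp: Vset_def)
    then show False using small[of I v] Iv vl False nz by simp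
  qed
qed

theorem mainTheorem9:
  shows "{l. is_partition l \<and> length l = 5 \<and> novel l} = {[2, 1, 1, 1, 1]}"
proof
  show "{[2, 1, 1, 1, 1]} \<subseteq> {l. is_partition l \<and> length l = 5 \<and> novel l}"
    using novel21 by (simp add: is_partition_def)
next
  show "{l. is_partition l \<and> length l = 5 \<and> novel l} \<subseteq> {[2, 1, 1, 1, 1]}"
  proof
    fix l assume "l \<in> {l. is_partition l \<and> length l = 5 \<and> novel l}"
    then have p: "is_partition l" "length l = 5" "novel l" by auto
    obtain a b c d e where l: "l = [a,b,c,d,e]" using p(2)
      by (auto simp: numeral_eq_Suc length_Suc_conv)
    have ord: "a \<ge> b" "b \<ge> c" "c \<ge> d" "d \<ge> e" "e \<ge> 1" using p(1) l by (auto simp: is_partition_def)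
    have p11: "is_partition [1,1]" by (simp add: is_partition_def)
    have nsr: "\<not> strictly_reduces l [1,1]" using p(3) p11 by (auto simp: novel_def)
    show "l \<in> {[2, 1, 1, 1, 1]}"
    proof (cases "a+b = c+d+e")
      case False
      have "strictly_reduces l [1,1]"
        proof (rule pair_red5[OF p(1) l, of 0 1 "-1"])
          fix x0 x1 x2 x3 x4 :: int assume h: "x0 \<in> {-1,1}" "x1 \<in> {-1,1}" "x2 \<in> {-1,1}" "x3 \<in> {-1,1}" "x4 \<in> {-1,1}" "a*x0+b*x1+c*x2+d*x3+e*x4 = 0"
          show "[x0,x1,x2,x3,x4] ! 0 * [x0,x1,x2,x3,x4] ! 1 = -1" using pair_const(1)[OF ord h] False by simp
        qed simp_all
      then show ?thesis using nsr by simp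
    next
      case eq: True
      show ?thesis
      proof (cases "c < b")
        case True
        have "strictly_reduces l [1,1]"
          proof (rule pair_red5[OF p(1) l, of 1 2 "-1"])
            fix x0 x1 x2 x3 x4 :: int assume h: "x0 \<in> {-1,1}" "x1 \<in> {-1,1}" "x2 \<in> {-1,1}" "x3 \<in> {-1,1}" "x4 \<in> {-1,1}" "a*x0+b*x1+c*x2+d*x3+e*x4 = 0"
            show "[x0,x1,x2,x3,x4] ! 1 * [x0,x1,x2,x3,x4] ! 2 = -1" using pair_const(2)[OF ord h] eq True by simp
          qed simp_all
        then show ?thesis using nsr by simp
      next
        case cb: False
        have cbe: "c = b" using ord(2) cb by simp
        show ?thesis
        proof (cases "d < b")
          case True
          have "strictly_reduces l [1,1]"
            proof (rule pair_red5[OF p(1) l, of 3 4 1])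
              fix x0 x1 x2 x3 x4 :: int assume h: "x0 \<in> {-1,1}" "x1 \<in> {-1,1}" "x2 \<in> {-1,1}" "x3 \<in> {-1,1}" "x4 \<in> {-1,1}" "a*x0+b*x1+c*x2+d*x3+e*x4 = 0"
              show "[x0,x1,x2,x3,x4] ! 3 * [x0,x1,x2,x3,x4] ! 4 = 1" using pair_const(3)[OF ord h] eq True cbe by simp
            qed simp_all
          then show ?thesis using nsr by simp
        next
          case db: False
          have dbe: "d = b" using ord cbe db by simp
          show ?thesis
          proof (cases "e < b")
            case True
            have "strictly_reduces l [1,1]"
              proof (rule pair_red5[OF p(1) l, of 0 4 "-1"])
                fix x0 x1 x2 x3 x4 :: int assume h: "x0 \<in> {-1,1}" "x1 \<in> {-1,1}" "x2 \<in> {-1,1}" "x3 \<in> {-1,1}" "x4 \<in> {-1,1}" "a*x0+b*x1+c*x2+d*x3+e*x4 = 0"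
                show "[x0,x1,x2,x3,x4] ! 0 * [x0,x1,x2,x3,x4] ! 4 = -1" using pair_const(4)[OF ord h] eq True cbe dbe by simp
              qed simp_all
            then show ?thesis using nsr by simp
          next
            case False
            have bs: "c = b" "d = b" "e = b" "a = 2*b" using ord cb db False eq by auto
            show ?thesis
            proof (cases "b = 1")
              case True then show ?thesis using l bs by simp
            next
              case b1: False
              have "perpB l = perpB [2,1,1,1,1]" using scale[of b] ord bs l by simp
              moreover have "[2,1,1,1,1] \<in> Vset [2,1,1,1,1]" by (simp add: Vset_def)
              ultimately have "equivalent l [2,1,1,1,1]" using l unfolding equivalent_def by auto
              moreover have "is_partition [2,1,1,1,1]" by (simp add: is_partition_def)
              moreover have "\<not> lex_le l [2,1,1,1,1]" using l bs b1 ord by (auto simp: lex_le_def)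
              ultimately show ?thesis using p(2,3) by (auto simp: novel_def)
            qed
          qed
        qed
      qed
    qed
  qed
qed

end
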